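(* Let $\omega\in\widehat{\mathcal D}$. Then there exists $K=K(\omega)>1$ such that the sequence $\{M_n\}_{n=0}^\infty=\{M_n(\omega,K)\}$ is lacunary, i.e. there exists $C>1$ with $M_{n+1}\ge CM_n$ for all $n\in\mathbb N\cup\{0\}$.
   Context: A radial weight is a nonnegative $\omega\in L^1([0,1))$; $\widehat\omega(r)=\int_r^1\omega(s)ds>0$ for all $r\in[0,1)$. $\omega\in\widehat{\mathcal D}$ means $\widehat\omega(r)\le C\widehat\omega(\frac{1+r}2)$ for some $C>0$ and all $0\le r<1$. For $K>1$ and $n\in\mathbb N\cup\{0\}$, $r_n=r_n(\omega,K)=\inf\{r\in[0,1):\widehat\omega(r)=\widehat\omega(0)K^{-n}\}$, and $M_n=M_n(\omega,K)=E\big(\frac1{1-r_n}\big)$, where $E(x)$ is the integer part of $x$. *)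

theory Defs
  imports "HOL-Analysis.Analysis"
begin

definition omega_hat :: "(real \<Rightarrow> real) \<Rightarrow> real \<Rightarrow> real" where
  "omega_hat w r = (LINT s:{r..<1}|lborel. w s)"

definition radial_weight :: "(real \<Rightarrow> real) \<Rightarrow> bool" where
  "radial_weight w \<longleftrightarrow>
     (\<forall>s\<in>{0..<1}. 0 \<le> w s) \<and> set_integrable lborel {0..<1::real} w \<and>
     (\<forall>r\<in>{0..<1}. omega_hat w r > 0)"

definition D_hat :: "(real \<Rightarrow> real) \<Rightarrow> bool" where
  "D_hat w \<longleftrightarrow> radial_weight w \<and>
     (\<exists>C>0. \<forall>r\<in>{0..<1}. omega_hat w r \<le> C * omega_hat w ((1 + r) / 2))"

definition r_seq :: "(real \<Rightarrow> real) \<Rightarrow> real \<Rightarrow> nat \<Rightarrow> real" where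
  "r_seq w K n = Inf {r\<in>{0..<1}. omega_hat w r = omega_hat w 0 * K powr (- real n)}"

definition M_seq :: "(real \<Rightarrow> real) \<Rightarrow> real \<Rightarrow> nat \<Rightarrow> int" where
  "M_seq w K n = \<lfloor>1 / (1 - r_seq w K n)\<rfloor>"

end

theory Submission
  imports Defs
begin

lemma neg_pt: "negligible {x \<in> S. x = (1::real) \<and> P x}"
  by (rule negligible_subset[of "{1}"]) auto

lemma hk_int:
  assumes "radial_weight w"
  shows "w integrable_on {0..1}"
proof -
  have "set_integrable lborel {0..<1::real} w" using assms unfolding radial_weight_def by blast
  then have i: "w integrable_on {0..<1}" by (rule set_borel_integral_eq_integral)
  show ?thesis
    by (rule integrable_spike_set[OF i]) (auto intro: negligible_subset[of "{1}"])
qed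

lemma hk_eq:
  assumes "radial_weight w" "0 \<le> r" "r < 1"
  shows "omega_hat w r = integral {r..1} w"
proof -
  have "set_integrable lborel {0..<1::real} w" using assms unfolding radial_weight_def by blast
  then have "set_integrable lborel {r..<1::real} w"
    by (rule set_integrable_subset) (use assms in auto)
  then have "omega_hat w r = integral {r..<1} w"
    unfolding omega_hat_def by (rule set_borel_integral_eq_integral)
  also have "\<dots> = integral {r..1} w"
    by (rule integral_spike_set) (auto intro: negligible_subset[of "{1}"])
  finally show ?thesis .
qed

lemma hk_anti:
  assumes "radial_weight w" "0 \<le> a" "a \<le> b" "b < 1"
  shows "omega_hat w b \<le> omega_hat w a"
proof -
  have i: "w integrable_on {a..1}"
    by (rule integrable_on_subinterval[OF hk_int[OF assms(1)]]) (use assms in auto)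
  have "integral {a..b} w + integral {b..1} w = integral {a..1} w"
    by (rule Henstock_Kurzweil_Integration.integral_combine) (use assms i in auto)
  moreover have "0 \<le> integral {a..b} w"
    apply (rule integral_nonneg)
     apply (rule integrable_on_subinterval[OF hk_int[OF assms(1)]])
    using assms unfolding radial_weight_def by auto
  ultimately show ?thesis using hk_eq[OF assms(1)] assms by auto
qed

lemma hk_ivt:
  assumes "radial_weight w" "0 < y" "y \<le> omega_hat w 0"
  shows "\<exists>r\<in>{0..<1}. omega_hat w r = y"
proof -
  have c: "continuous_on {0..1} (\<lambda>x. integral {x..1} w)"
    by (rule indefinite_integral_continuous_1'[OF hk_int[OF assms(1)]])
  have "\<exists>x. 0 \<le> x \<and> x \<le> 1 \<and> integral {x..1} w = y"
    by (rule IVT2'[OF _ _ _ c]) (use assms hk_eq[OF assms(1), of 0] in auto)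
  then obtain x where x: "0 \<le> x" "x \<le> 1" "integral {x..1} w = y" by blast
  have "x \<noteq> 1" using x assms by auto
  then show ?thesis using x hk_eq[OF assms(1), of x] by auto
qed

theorem lemma2p2:
  fixes w :: "real \<Rightarrow> real"
  assumes "D_hat w"
  shows "\<exists>K>1. \<exists>C>1. \<forall>n. real_of_int (M_seq w K (Suc n)) \<ge> C * real_of_int (M_seq w K n)"
proof -
  have rw: "radial_weight w" using assms unfolding D_hat_def by blast
  obtain C where C: "C > 0" "\<And>r. r\<in>{0..<1} \<Longrightarrow> omega_hat w r \<le> C * omega_hat w ((1 + r) / 2)"
    using assms unfolding D_hat_def by blast
  define K where "K = max C 1 + 1"
  have K1: "K > 1" and KC: "K > C" unfolding K_def by auto
  have w0: "omega_hat w 0 > 0" using rw unfolding radial_weight_def by auto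
  define S where "S n = {r\<in>{0..<1}. omega_hat w r = omega_hat w 0 * K powr (- real n)}" for n
  have rS: "r_seq w K n = Inf (S n)" for n unfolding r_seq_def S_def by simp
  have ne: "S n \<noteq> {}" for n
  proof -
    have "0 < omega_hat w 0 * K powr (- real n)" using w0 K1 by simp
    moreover have "1 \<le> K powr real n" using K1 by (intro ge_one_powr_ge_zero) auto
    then have "K powr (- real n) \<le> 1" by (simp add: powr_minus inverse_le_1_iff)
    then have "omega_hat w 0 * K powr (- real n) \<le> omega_hat w 0" using w0
      by (simp add: mult_left_le)
    ultimately show ?thesis using hk_ivt[OF rw] unfolding S_def by blast
  qed
  have bdd: "bdd_below (S n)" for n unfolding S_def by (rule bdd_belowI[of _ 0]) auto
  have sep: "s > (1 + a) / 2" if s: "s \<in> S (Suc n)" and a: "a \<in> S n" for s a n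
  proof (rule ccontr)
    assume "\<not> s > (1 + a) / 2"
    then have le: "s \<le> (1 + a) / 2" by simp
    have a01: "0 \<le> a" "a < 1" using a unfolding S_def by auto
    have s01: "0 \<le> s" "s < 1" using s unfolding S_def by auto
    have "omega_hat w ((1 + a) / 2) \<le> omega_hat w s"
      by (rule hk_anti[OF rw]) (use le a01 s01 in auto)
    also have "\<dots> = omega_hat w 0 * K powr (- real n) / K"
      using s K1 unfolding S_def by (simp add: powr_diff powr_minus divide_inverse)
    also have "\<dots> < omega_hat w 0 * K powr (- real n) / C"
      using KC C(1) w0 K1 by (intro divide_strict_left_mono) auto
    also have "omega_hat w 0 * K powr (- real n) = omega_hat w a" using a unfolding S_def by simp
    finally have "omega_hat w ((1 + a) / 2) < omega_hat w a / C" .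
    then have "C * omega_hat w ((1 + a) / 2) < omega_hat w a" using C(1) by (simp add: field_simps)
    moreover have "omega_hat w a \<le> C * omega_hat w ((1 + a) / 2)" using C(2) a01 by auto
    ultimately show False by linarith
  qed
  have r01: "0 \<le> r_seq w K n \<and> r_seq w K n < 1" for n
  proof -
    obtain a where a: "a \<in> S n" using ne by blast
    have "r_seq w K n \<le> a" unfolding rS by (rule cInf_lower[OF a bdd])
    moreover have "0 \<le> r_seq w K n" unfolding rS
      by (rule cInf_greatest[OF ne]) (auto simp: S_def)
    ultimately show ?thesis using a unfolding S_def by auto
  qed
  have step: "(1 + r_seq w K n) / 2 \<le> r_seq w K (Suc n)" for n
    unfolding rS[of "Suc n"]
  proof (rule cInf_greatest[OF ne, where z = "(1 + r_seq w K n) / 2"])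
    fix s assume s: "s \<in> S (Suc n)"
    obtain a where a: "a \<in> S n" using ne by blast
    have "r_seq w K n \<le> a" unfolding rS by (rule cInf_lower[OF a bdd])
    then show "(1 + r_seq w K n) / 2 \<le> s" using sep[OF s a] by (simp add: field_simps)
  qed
  have main: "2 * real_of_int (M_seq w K n) \<le> real_of_int (M_seq w K (Suc n))" for n
  proof -
    define x where "x = 1 / (1 - r_seq w K n)"
    define y where "y = 1 / (1 - r_seq w K (Suc n))"
    have p1: "0 < 1 - r_seq w K n" "0 < 1 - r_seq w K (Suc n)" using r01[of n] r01[of "Suc n"] by auto
    have le: "1 - r_seq w K (Suc n) \<le> (1 - r_seq w K n) / 2" using step[of n] by (simp add: field_simps)
    have "2 * x \<le> y" unfolding x_def y_def using p1 le
      by (simp add: field_simps)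
    then have "floor (2 * x) \<le> floor y" by (rule floor_mono)
    moreover have "2 * floor x \<le> floor (2 * x)"
      by (metis floor_add_int floor_mono le_floor_iff of_int_add of_int_floor_le add_mono mult_2)
    ultimately show ?thesis unfolding M_seq_def x_def y_def by linarith
  qed
  show ?thesis
    by (rule exI[of _ K], rule conjI[OF K1], rule exI[of _ 2]) (use main in auto)
qed

end
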